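(* For all integers $n>1$ and $m\geq1$, $\operatorname{ecc}_{Z_{n,m}}(0)\geq\lfloor\frac{n(m+1)}{2}\rfloor$.
   Context: Elements of $\mathbb{Z}_n$ are identified with representatives in $\{0,\dots,n-1\}$. The dYoke graph $Z_{n,m}$ has vertices $u=(u_0,\dots,u_{m+1})\in\mathbb{Z}_n\times\{-1,0,1\}^m\times\mathbb{Z}_n$ with $\sum u_i\equiv0\pmod n$; $u,v$ adjacent if there is $0\leq i\leq m$ with $u_j=v_j$ for $j\notin\{i,i+1\}$ and either ($u_i=v_i+1$, $u_{i+1}=v_{i+1}-1$) or ($u_i=v_i-1$, $u_{i+1}=v_{i+1}+1$), arithmetic in coordinates $0,m+1$ in $\mathbb{Z}_n$. $\operatorname{ecc}_{Z_{n,m}}(0)$ is the maximum distance from the all-zero vertex $0$ to any vertex. *)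

theory Defs
  imports Main "HOL-Library.Extended_Nat"
begin

text \<open>Vertices of the dYoke graph Z_{n,m}: tuples (u_0,...,u_{m+1}) encoded as functions
  nat => int that vanish beyond index m+1; u_0, u_{m+1} are representatives in {0..n-1}
  of Z_n, middle coordinates in {-1,0,1}, and the total sum is 0 mod n.\<close>

definition dyoke_vertices :: "nat \<Rightarrow> nat \<Rightarrow> (nat \<Rightarrow> int) set" where
  "dyoke_vertices n m = {u.
      u 0 \<in> {0..int n - 1} \<and> u (m+1) \<in> {0..int n - 1}
    \<and> (\<forall>j. 1 \<le> j \<and> j \<le> m \<longrightarrow> u j \<in> {-1,0,1})
    \<and> (\<forall>j. j > m+1 \<longrightarrow> u j = 0)
    \<and> (\<Sum>j\<le>m+1. u j) mod int n = 0}"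

definition coord_eq :: "nat \<Rightarrow> nat \<Rightarrow> nat \<Rightarrow> int \<Rightarrow> int \<Rightarrow> bool" where
  "coord_eq n m j a b = (if j = 0 \<or> j = m+1 then a mod int n = b mod int n else a = b)"

definition dyoke_adj :: "nat \<Rightarrow> nat \<Rightarrow> (nat \<Rightarrow> int) \<Rightarrow> (nat \<Rightarrow> int) \<Rightarrow> bool" where
  "dyoke_adj n m u v \<longleftrightarrow> u \<in> dyoke_vertices n m \<and> v \<in> dyoke_vertices n m \<and>
     (\<exists>i\<le>m. (\<forall>j\<le>m+1. j \<noteq> i \<and> j \<noteq> i+1 \<longrightarrow> u j = v j) \<and>
        ((coord_eq n m i (u i) (v i + 1) \<and> coord_eq n m (i+1) (u (i+1)) (v (i+1) - 1)) \<or>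
         (coord_eq n m i (u i) (v i - 1) \<and> coord_eq n m (i+1) (u (i+1)) (v (i+1) + 1))))"

definition dyoke_dist :: "nat \<Rightarrow> nat \<Rightarrow> (nat \<Rightarrow> int) \<Rightarrow> (nat \<Rightarrow> int) \<Rightarrow> enat" where
  "dyoke_dist n m u v = (if \<exists>k. (dyoke_adj n m ^^ k) u v
       then enat (LEAST k. (dyoke_adj n m ^^ k) u v) else \<infinity>)"

definition dyoke_ecc :: "nat \<Rightarrow> nat \<Rightarrow> (nat \<Rightarrow> int) \<Rightarrow> enat" where
  "dyoke_ecc n m u = (SUP v\<in>dyoke_vertices n m. dyoke_dist n m u v)"

end

theory Submission
  imports Defs
begin

definition Tp :: "(nat \<Rightarrow> int) \<Rightarrow> nat \<Rightarrow> int" where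
  "Tp u k = (\<Sum>j\<le>k. u j)"

definition Phi :: "nat \<Rightarrow> nat \<Rightarrow> (nat \<Rightarrow> int) \<Rightarrow> int \<Rightarrow> int" where
  "Phi n m u c = (\<Sum>k\<le>m. \<bar>Tp u k + c * int n\<bar>)"

lemma mod_ex: "a mod int n = b mod int n \<Longrightarrow> \<exists>d. a - b = d * int n"
  by (metis mod_eq_dvd_iff dvd_def mult.commute)

lemma adj_delta:
  assumes "dyoke_adj n m u v" "m \<ge> 1"
  shows "\<exists>i\<le>m. \<exists>\<epsilon> d. \<bar>\<epsilon>\<bar> \<le> 1 \<and> (i \<noteq> 0 \<longrightarrow> d = 0) \<and>
     (\<forall>j\<le>m. v j - u j = (if j = i then \<epsilon> + d * int n else if j = i+1 then -\<epsilon> else 0))"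
proof -
  from assms(1) obtain i where i: "i \<le> m" and H: "\<forall>j\<le>m+1. j \<noteq> i \<and> j \<noteq> i+1 \<longrightarrow> u j = v j"
    and D: "(coord_eq n m i (u i) (v i + 1) \<and> coord_eq n m (i+1) (u (i+1)) (v (i+1) - 1)) \<or>
         (coord_eq n m i (u i) (v i - 1) \<and> coord_eq n m (i+1) (u (i+1)) (v (i+1) + 1))"
    unfolding dyoke_adj_def by blast
  from D obtain s :: int where s: "s = 1 \<or> s = -1" and c1: "coord_eq n m i (u i) (v i + s)"
    and c2: "coord_eq n m (i+1) (u (i+1)) (v (i+1) - s)"
    by (metis diff_minus_eq_add diff_conv_add_uminus)
  have e1: "\<exists>d. v i - u i = -s + d * int n \<and> (i \<noteq> 0 \<longrightarrow> d = 0)"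
  proof (cases "i = 0")
    case True
    with c1 have "u i mod int n = (v i + s) mod int n" by (simp add: coord_eq_def)
    then obtain d where "u i - (v i + s) = d * int n" using mod_ex by blast
    then have "v i - u i = -s + (-d) * int n" by (simp add: algebra_simps)
    then show ?thesis using True by blast
  next
    case False
    with i c1 have "u i = v i + s" by (simp add: coord_eq_def)
    then have "v i - u i = -s + 0 * int n" by simp
    then show ?thesis by blast
  qed
  then obtain d where d: "v i - u i = -s + d * int n" "i \<noteq> 0 \<longrightarrow> d = 0" by blast
  have e2: "v (i+1) - u (i+1) = s" if "i+1 \<le> m"
  proof -
    from that c2 have "u (i+1) = v (i+1) - s" by (simp add: coord_eq_def)
    then show ?thesis by simp
  qed
  have "\<forall>j\<le>m. v j - u j = (if j = i then -s + d * int n else if j = i+1 then - (-s) else 0)"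
    using H d e2 by auto
  moreover have "\<bar>-s\<bar> \<le> 1" using s by auto
  ultimately show ?thesis using i d(2) by blast
qed

lemma prefix_delta:
  assumes "\<forall>j\<le>m. v j - u j = (if j = i then \<epsilon> + d * int n else if j = i+1 then -\<epsilon> else 0)"
    "i \<noteq> 0 \<longrightarrow> d = 0" "k \<le> m"
  shows "Tp v k - Tp u k = d * int n + (if k = i then \<epsilon> else 0)"
  using assms(3)
proof (induction k)
  case 0
  then show ?case using assms(1,2) by (auto simp: Tp_def)
next
  case (Suc k)
  then have IH: "Tp v k - Tp u k = d * int n + (if k = i then \<epsilon> else 0)" by simp
  have "Tp v (Suc k) - Tp u (Suc k) = (Tp v k - Tp u k) + (v (Suc k) - u (Suc k))"
    by (simp add: Tp_def)
  also have "v (Suc k) - u (Suc k) = (if Suc k = i then \<epsilon> + d * int n else if Suc k = i+1 then -\<epsilon> else 0)"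
    using assms(1) Suc.prems by blast
  finally show ?case using IH assms(2) by auto
qed

lemma phi_step:
  assumes "dyoke_adj n m u v" "m \<ge> 1"
  shows "\<exists>c'. Phi n m v c' \<le> Phi n m u c + 1"
proof -
  obtain i \<epsilon> d where i: "i \<le> m" and eps: "\<bar>\<epsilon>\<bar> \<le> 1" and d0: "i \<noteq> 0 \<longrightarrow> d = 0"
    and D: "\<forall>j\<le>m. v j - u j = (if j = i then \<epsilon> + d * int n else if j = i+1 then -\<epsilon> else 0)"
    using adj_delta[OF assms] by blast
  have "Phi n m v (c - d) = (\<Sum>k\<le>m. \<bar>Tp v k + (c - d) * int n\<bar>)" by (simp add: Phi_def)
  also have "\<dots> \<le> (\<Sum>k\<le>m. \<bar>Tp u k + c * int n\<bar> + (if k = i then 1 else 0))"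
  proof (rule sum_mono)
    fix k assume "k \<in> {..m}"
    then have "Tp v k - Tp u k = d * int n + (if k = i then \<epsilon> else 0)"
      using prefix_delta[OF D d0] by auto
    then have "Tp v k + (c - d) * int n = Tp u k + c * int n + (if k = i then \<epsilon> else 0)"
      by (simp add: algebra_simps)
    then show "\<bar>Tp v k + (c - d) * int n\<bar> \<le> \<bar>Tp u k + c * int n\<bar> + (if k = i then 1 else 0)"
      using eps by auto
  qed
  also have "\<dots> = Phi n m u c + 1"
    using i by (simp add: sum.distrib Phi_def)
  finally show ?thesis by blast
qed

lemma reach:
  assumes "m \<ge> 1"
  shows "(dyoke_adj n m ^^ k) (\<lambda>_. 0) v \<Longrightarrow> \<exists>c. Phi n m v c \<le> int k"
proof (induction k arbitrary: v)
  case 0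
  then have "v = (\<lambda>_. 0)" by simp
  then have "Phi n m v 0 = 0" by (simp add: Phi_def Tp_def)
  then show ?case by (metis of_nat_0 order_refl)
next
  case (Suc k)
  then obtain w where w: "(dyoke_adj n m ^^ k) (\<lambda>_. 0) w" "dyoke_adj n m w v" by auto
  from Suc.IH[OF w(1)] obtain c where "Phi n m w c \<le> int k" by blast
  moreover obtain c' where "Phi n m v c' \<le> Phi n m w c + 1" using phi_step[OF w(2) assms] by blast
  ultimately have "Phi n m v c' \<le> int (Suc k)" by simp
  then show ?case by blast
qed

lemma sum_mod2: "(\<Sum>k\<le>m. int (k mod 2)) = int ((m+1) div 2)"
  by (induction m) (auto, presburger)

theorem lemma5p16:
  fixes n m :: nat
  assumes "n > 1" and "m \<ge> 1"
  shows "dyoke_ecc n m (\<lambda>_. 0) \<ge> enat ((n * (m + 1)) div 2)"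
proof -
  define t where "t = int (n div 2)"
  define r where "r = int (n mod 2)"
  define Tt where "Tt k = t + int (k mod 2) * r" for k :: nat
  define v where "v j = (if j = 0 then t else if j \<le> m then Tt j - Tt (j-1)
      else if j = m+1 then int n - Tt m else 0)" for j
  have nt: "int n = 2 * t + r" unfolding t_def r_def by (metis div_mult_mod_eq mult.commute of_nat_add of_nat_mult of_nat_numeral)
  have r01: "r = 0 \<or> r = 1" unfolding r_def by auto
  have t1: "t \<ge> 1" unfolding t_def using assms(1) by simp
  have TpV: "Tp v k = Tt k" if "k \<le> m" for k
    using that
  proof (induction k)
    case 0 then show ?case by (simp add: Tp_def v_def Tt_def)
  next
    case (Suc k)
    then have "Tp v (Suc k) = Tt k + v (Suc k)" by (simp add: Tp_def)
    also have "v (Suc k) = Tt (Suc k) - Tt k" using Suc.prems by (simp add: v_def)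
    finally show ?case by simp
  qed
  have Ttm: "Tt m = t \<or> Tt m = t + r" unfolding Tt_def by (cases "m mod 2 = 0") auto
  have vert: "v \<in> dyoke_vertices n m"
  proof -
    have a: "v 0 \<in> {0..int n - 1}" using nt t1 r01 by (auto simp: v_def)
    have b: "v (m+1) \<in> {0..int n - 1}" using nt t1 r01 Ttm by (auto simp: v_def)
    have c: "\<forall>j. 1 \<le> j \<and> j \<le> m \<longrightarrow> v j \<in> {-1,0,1}"
    proof (intro allI impI)
      fix j :: nat assume j: "1 \<le> j \<and> j \<le> m"
      then have "v j = r * (int (j mod 2) - int ((j - 1) mod 2))" by (simp add: v_def Tt_def algebra_simps)
      moreover have "j mod 2 = 0 \<and> (j-1) mod 2 = 1 \<or> j mod 2 = 1 \<and> (j-1) mod 2 = 0" using j by presburger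
      ultimately show "v j \<in> {-1,0,1}" using r01 by auto
    qed
    have d: "\<forall>j. j > m+1 \<longrightarrow> v j = 0" by (simp add: v_def)
    have "(\<Sum>j\<le>m+1. v j) = Tp v m + v (m+1)" by (simp add: Tp_def)
    also have "\<dots> = int n" using TpV[of m] by (simp add: v_def)
    finally have e: "(\<Sum>j\<le>m+1. v j) mod int n = 0" by simp
    show ?thesis unfolding dyoke_vertices_def using a b c d e by blast
  qed
  define N where "N = (n * (m + 1)) div 2"
  have Nint: "int N = (int m + 1) * t + r * int ((m+1) div 2)"
  proof -
    have "int N = int (n * (m+1)) div 2" unfolding N_def by (simp add: zdiv_int)
    also have "\<dots> = (2 * ((int m + 1) * t) + r * (int m + 1)) div 2" using nt by (simp add: algebra_simps)
    also have "\<dots> = (int m + 1) * t + (r * (int m + 1)) div 2" by simp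
    also have "(r * (int m + 1)) div 2 = r * int ((m+1) div 2)" using r01 by (auto simp: zdiv_int)
    finally show ?thesis .
  qed
  have sr: "(\<Sum>k\<le>m. r * int (k mod 2)) = r * int (Suc m div 2)"
    using sum_mod2[of m] by (simp add: sum_distrib_left[symmetric])
  have sr2: "(\<Sum>k\<le>m. int (k mod 2) * r) = r * int (Suc m div 2)"
    using sr by (simp add: mult.commute)
  have low: "int N \<le> Phi n m v c" for c
  proof (cases "c \<ge> 0")
    case True
    have "(\<Sum>k\<le>m. Tt k) \<le> Phi n m v c" unfolding Phi_def
    proof (rule sum_mono)
      fix k assume "k \<in> {..m}"
      then have "Tp v k = Tt k" using TpV by auto
      moreover have "Tt k \<ge> 0" using t1 r01 by (auto simp: Tt_def)
      moreover have "c * int n \<ge> 0" using True by simp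
      ultimately show "Tt k \<le> \<bar>Tp v k + c * int n\<bar>" by simp
    qed
    moreover have "(\<Sum>k\<le>m. Tt k) = (int m + 1) * t + r * int ((m+1) div 2)"
      unfolding Tt_def by (simp add: sum.distrib sum_distrib_right[symmetric] sum_mod2 sr sr2 algebra_simps)
    ultimately show ?thesis using Nint by simp
  next
    case False
    have "(\<Sum>k\<le>m. t + r - int (k mod 2) * r) \<le> Phi n m v c" unfolding Phi_def
    proof (rule sum_mono)
      fix k assume "k \<in> {..m}"
      then have "Tp v k = Tt k" using TpV by auto
      moreover have "c * int n \<le> - int n" using False mult_right_mono[of c "-1" "int n"] by simp
      ultimately show "t + r - int (k mod 2) * r \<le> \<bar>Tp v k + c * int n\<bar>"
        using nt by (simp add: Tt_def)
    qed
    moreover have "(\<Sum>k\<le>m. t + r - int (k mod 2) * r) = (int m + 1) * (t + r) - r * int ((m+1) div 2)"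
      by (simp add: sum_subtractf sum.distrib sum_distrib_right[symmetric] sum_mod2 sr sr2 algebra_simps)
    moreover have "int ((m+1) div 2) * 2 \<le> int m + 1" by simp
    ultimately show ?thesis using Nint r01 by (auto simp: algebra_simps)
  qed
  have dist: "enat N \<le> dyoke_dist n m (\<lambda>_. 0) v"
  proof (cases "\<exists>k. (dyoke_adj n m ^^ k) (\<lambda>_. 0) v")
    case True
    define L where "L = (LEAST k. (dyoke_adj n m ^^ k) (\<lambda>_. 0) v)"
    have "(dyoke_adj n m ^^ L) (\<lambda>_. 0) v" unfolding L_def using True by (rule LeastI_ex)
    then obtain c where "Phi n m v c \<le> int L" using reach[OF assms(2)] by blast
    with low[of c] have "N \<le> L" by simp
    then show ?thesis using True by (simp add: dyoke_dist_def L_def)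
  next
    case False
    then show ?thesis by (simp add: dyoke_dist_def)
  qed
  also have "\<dots> \<le> dyoke_ecc n m (\<lambda>_. 0)"
    unfolding dyoke_ecc_def using vert by (rule SUP_upper)
  finally show ?thesis unfolding N_def .
qed

end
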